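(* Let $\Gamma=(Q,A,E,(\delta_e)_{e\in E})$ be an MEMDP, $q\in Q$, and $W$ a parity objective. Then $$\sup_{\tau\in\mathcal D(\mathrm{Strat}(Q,A))}\mathrm{val}^{\mathrm{uni}}_q(\Gamma,\tau,W)=\mathrm{val}^{\mathrm{uni}}_q(\Gamma,W).$$
   Context: $\mathcal D(X)$ is the set of distributions on $X$ with countable support. An MDP $G=(Q,A,\delta)$ has finite non-empty $Q,A$ and $\delta:Q\times A\to\mathcal D(Q)$; strategies are maps $\sigma:Q\cdot(A\cdot Q)^*\to\mathcal D(A)$, $\mathrm{Strat}(Q,A)$ is their set, and $\mathbb P^\sigma_q[G,\cdot]$ is the induced probability measure on infinite runs from $q$ (infinite state sequences measured by projection). A mixed strategy is $\tau\in\mathcal D(\mathrm{Strat}(Q,A))$ (countable support), with $\mathbb P^\tau_q[G,\cdot]:=\sum_\sigma\tau(\sigma)\mathbb P^\sigma_q[G,\cdot]$. A parity objective given by $f:Q\to\mathbb N$ is the set of infinite state sequences whose maximal label seen infinitely often is even. An MEMDP is $\Gamma=(Q,A,E,(\delta_e)_{e\in E})$ with $E$ finite non-empty and each $\Gamma[e]=(Q,A,\delta_e)$ an MDP. $\mathrm{val}^{\mathrm{uni}}_q(\Gamma,\tau,W)=\min_{e\in E}\mathbb P^\tau_q[\Gamma[e],W]$ and $\mathrm{val}^{\mathrm{uni}}_q(\Gamma,W)=\sup_{\sigma\in\mathrm{Strat}(Q,A)}\min_{e\in E}\mathbb P^\sigma_q[\Gamma[e],W]$. *)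

theory Defs
  imports "HOL-Probability.Probability"
begin

type_synonym ('q, 'a) hist = "'q \<times> ('a \<times> 'q) list"

text \<open>Strategies: maps from histories to distributions with countable support (pmf) on actions.
  Strat(Q,A) is the set of all such functions (the whole function type).\<close>
type_synonym ('q, 'a) strat = "('q, 'a) hist \<Rightarrow> 'a pmf"

definition hlast :: "('q, 'a) hist \<Rightarrow> 'q" where
  "hlast h = (if snd h = [] then fst h else snd (last (snd h)))"

definition step_kernel ::
  "('q \<Rightarrow> 'a \<Rightarrow> 'q pmf) \<Rightarrow> ('q, 'a) strat \<Rightarrow> ('q, 'a) hist \<Rightarrow> ('a \<times> 'q) pmf" where
  "step_kernel \<delta> \<sigma> h = do { a \<leftarrow> \<sigma> h; q' \<leftarrow> \<delta> (hlast h) a; return_pmf (a, q') }"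

text \<open>Given one independent sample of the step kernel for every history, the play from q
  extends the current history by the sample attached to it.\<close>
primrec hpath :: "'q \<Rightarrow> (('q, 'a) hist \<Rightarrow> ('a \<times> 'q)) \<Rightarrow> nat \<Rightarrow> ('q, 'a) hist" where
  "hpath q \<omega> 0 = (q, [])"
| "hpath q \<omega> (Suc n) = (fst (hpath q \<omega> n), snd (hpath q \<omega> n) @ [\<omega> (hpath q \<omega> n)])"

text \<open>Since each history is visited at most once,
  using independent samples per history yields exactly the law of the induced run.\<close>
definition run_measure ::
  "('q \<Rightarrow> 'a \<Rightarrow> 'q pmf) \<Rightarrow> ('q, 'a) strat \<Rightarrow> 'q \<Rightarrow> 'q stream measure" where
  "run_measure \<delta> \<sigma> q =
     distr (PiM UNIV (\<lambda>h. measure_pmf (step_kernel \<delta> \<sigma> h)))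
           (stream_space (count_space UNIV))
           (\<lambda>\<omega>. to_stream (\<lambda>n. hlast (hpath q \<omega> n)))"

definition parity :: "('q \<Rightarrow> nat) \<Rightarrow> 'q stream set" where
  "parity f = {\<omega>. even (Max (f ` {s. \<exists>\<^sub>\<infinity>n. \<omega> !! n = s}))}"

definition mixed_prob ::
  "('q \<Rightarrow> 'a \<Rightarrow> 'q pmf) \<Rightarrow> ('q, 'a) strat pmf \<Rightarrow> 'q \<Rightarrow> 'q stream set \<Rightarrow> real" where
  "mixed_prob \<delta> \<tau> q W = (\<Sum>\<^sub>\<infinity>\<sigma>\<in>set_pmf \<tau>. pmf \<tau> \<sigma> * measure (run_measure \<delta> \<sigma> q) W)"

definition val_uni_mixed ::
  "'e set \<Rightarrow> ('e \<Rightarrow> 'q \<Rightarrow> 'a \<Rightarrow> 'q pmf) \<Rightarrow> 'q \<Rightarrow> ('q, 'a) strat pmf \<Rightarrow> 'q stream set \<Rightarrow> real" where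
  "val_uni_mixed E \<delta> q \<tau> W = (MIN e\<in>E. mixed_prob (\<delta> e) \<tau> q W)"

definition val_uni ::
  "'e set \<Rightarrow> ('e \<Rightarrow> 'q \<Rightarrow> 'a \<Rightarrow> 'q pmf) \<Rightarrow> 'q \<Rightarrow> 'q stream set \<Rightarrow> real" where
  "val_uni E \<delta> q W = (SUP \<sigma>. MIN e\<in>E. measure (run_measure (\<delta> e) \<sigma> q) W)"

end

theory Submission
  imports Defs
begin


lemma hpath_fst: "fst (hpath q \<omega> n) = q"
  by (induction n) auto

lemma hpath_len: "length (snd (hpath q \<omega> n)) = n"
  by (induction n) auto

lemma hpath_take: "i \<le> n \<Longrightarrow> hpath q \<omega> i = (q, take i (snd (hpath q \<omega> n)))"
proof (induction n)
  case 0 then show ?case by (simp add: hpath_fst)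
next
  case (Suc n)
  show ?case
  proof (cases "i = Suc n")
    case True then show ?thesis by (metis hpath_fst hpath_len prod.collapse take_all_iff order_refl)
  next
    case False
    then have "i \<le> n" using Suc by simp
    then show ?thesis using Suc by (simp add: hpath_len)
  qed
qed

lemma hpath_nth: "i < n \<Longrightarrow> snd (hpath q \<omega> n) ! i = \<omega> (hpath q \<omega> i)"
proof (induction n)
  case 0 then show ?case by simp
next
  case (Suc n)
  then show ?case by (cases "i = n") (auto simp: nth_append hpath_len)
qed

lemma hpath_eq_iff:
  "hpath q \<omega> n = (q', l) \<longleftrightarrow> q' = q \<and> length l = n \<and> (\<forall>i<n. \<omega> (q, take i l) = l ! i)"
proof
  assume h: "hpath q \<omega> n = (q', l)"
  show "q' = q \<and> length l = n \<and> (\<forall>i<n. \<omega> (q, take i l) = l ! i)"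
    using hpath_fst[of q \<omega> n] hpath_len[of q \<omega> n] hpath_take[of _ n q \<omega>] hpath_nth[of _ n q \<omega>] h
    by (metis fst_conv less_imp_le snd_conv)
next
  assume r: "q' = q \<and> length l = n \<and> (\<forall>i<n. \<omega> (q, take i l) = l ! i)"
  then show "hpath q \<omega> n = (q', l)"
  proof (induction n arbitrary: l)
    case 0 then show ?case by simp
  next
    case (Suc n)
    then obtain l0 x where l: "l = l0 @ [x]"
      by (metis length_Suc_conv_rev)
    have "hpath q \<omega> n = (q', l0)"
      using Suc.prems l by (intro Suc.IH) (auto simp: nth_append)
    moreover have "\<omega> (q, l0) = x" using Suc.prems l
      by (metis length_append_singleton lessI nat.inject nth_append_length take_all_iff order_refl butlast_snoc butlast_take diff_Suc_1)
    ultimately show ?case using Suc.prems l by simp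
  qed
qed




definition Pw :: "('q \<Rightarrow> 'a \<Rightarrow> 'q pmf) \<Rightarrow> ('q, 'a) strat \<Rightarrow> ('q, 'a) hist \<Rightarrow> real" where
  "Pw \<delta> \<sigma> h = (\<Prod>i<length (snd h). pmf (step_kernel \<delta> \<sigma> (fst h, take i (snd h))) (snd h ! i))"

definition wS :: "('q, 'a) strat \<Rightarrow> ('q, 'a) hist \<Rightarrow> real" where
  "wS \<sigma> h = (\<Prod>i<length (snd h). pmf (\<sigma> (fst h, take i (snd h))) (fst (snd h ! i)))"

definition wD :: "('q \<Rightarrow> 'a \<Rightarrow> 'q pmf) \<Rightarrow> ('q, 'a) hist \<Rightarrow> real" where
  "wD \<delta> h = (\<Prod>i<length (snd h). pmf (\<delta> (hlast (fst h, take i (snd h))) (fst (snd h ! i))) (snd (snd h ! i)))"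

lemma pmf_step_kernel: "pmf (step_kernel \<delta> \<sigma> h) x = pmf (\<sigma> h) (fst x) * pmf (\<delta> (hlast h) (fst x)) (snd x)"
proof -
  have "step_kernel \<delta> \<sigma> h = bind_pmf (\<sigma> h) (\<lambda>a. map_pmf (Pair a) (\<delta> (hlast h) a))"
    unfolding step_kernel_def map_pmf_def by simp
  also have "pmf \<dots> x = (\<integral>a. pmf (map_pmf (Pair a) (\<delta> (hlast h) a)) x \<partial>measure_pmf (\<sigma> h))"
    by (simp add: pmf_bind)
  also have "\<dots> = (\<integral>a. (if a = fst x then pmf (\<delta> (hlast h) (fst x)) (snd x) else 0) \<partial>measure_pmf (\<sigma> h))"
  proof (intro Bochner_Integration.integral_cong refl)
    fix a
    show "pmf (map_pmf (Pair a) (\<delta> (hlast h) a)) x = (if a = fst x then pmf (\<delta> (hlast h) (fst x)) (snd x) else 0)"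
    proof (cases "a = fst x")
      case True
      then have "x = Pair a (snd x)" by simp
      then show ?thesis using True by (metis pmf_map_inj' inj_onI prod.inject)
    next
      case False
      then have "x \<notin> set_pmf (map_pmf (Pair a) (\<delta> (hlast h) a))" by auto
      then show ?thesis using False by (simp add: set_pmf_eq)
    qed
  qed
  also have "\<dots> = pmf (\<sigma> h) (fst x) * pmf (\<delta> (hlast h) (fst x)) (snd x)"
    by (subst integral_measure_pmf_real[of "{fst x}"]) (auto split: if_splits)
  finally show ?thesis .
qed

lemma Pw_eq: "Pw \<delta> \<sigma> h = wS \<sigma> h * wD \<delta> h"
  unfolding Pw_def wS_def wD_def pmf_step_kernel by (simp add: prod.distrib)

lemma wS_Nil[simp]: "wS \<sigma> (q, []) = 1"
  by (simp add: wS_def)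

lemma wS_snoc: "wS \<sigma> (q, l @ [x]) = wS \<sigma> (q, l) * pmf (\<sigma> (q, l)) (fst x)"
  unfolding wS_def by (simp add: prod.lessThan_Suc nth_append)

lemma wS_nonneg: "0 \<le> wS \<sigma> h"
  unfolding wS_def by (simp add: prod_nonneg)

lemma wS_le1: "wS \<sigma> h \<le> 1"
  unfolding wS_def by (intro prod_le_1) (auto simp: pmf_le_1)

lemma Pw_nonneg: "0 \<le> Pw \<delta> \<sigma> h"
  unfolding Pw_def by (simp add: prod_nonneg)

lemma Pw_le1: "Pw \<delta> \<sigma> h \<le> 1"
  unfolding Pw_def by (intro prod_le_1) (auto simp: pmf_le_1)

abbreviation PS :: "('q \<Rightarrow> 'a \<Rightarrow> 'q pmf) \<Rightarrow> ('q, 'a) strat \<Rightarrow> (('q, 'a) hist \<Rightarrow> 'a \<times> 'q) measure" where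
  "PS \<delta> \<sigma> \<equiv> PiM UNIV (\<lambda>h. measure_pmf (step_kernel \<delta> \<sigma> h))"

lemma PS_prod: "product_prob_space (\<lambda>h. measure_pmf (step_kernel \<delta> \<sigma> h))"
  by (rule product_prob_spaceI) (simp add: measure_pmf.prob_space_axioms)

lemma space_PS[simp]: "space (PS \<delta> \<sigma>) = UNIV"
  by (simp add: space_PiM)

lemma emeasure_hpath:
  fixes \<delta> :: "'q \<Rightarrow> 'a \<Rightarrow> 'q pmf" and l :: "('a \<times> 'q) list"
  assumes "length l = n"
  shows "emeasure (PS \<delta> \<sigma>) {\<omega>. hpath q \<omega> n = (q, l)} = ennreal (Pw \<delta> \<sigma> (q, l))"
proof -
  interpret product_prob_space "\<lambda>h. measure_pmf (step_kernel \<delta> \<sigma> h)" UNIV by (rule PS_prod)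
  define J where "J = (\<lambda>i. (q, take i l)) ` {..<n}"
  define X where "X = (\<lambda>j::('q,'a) hist. {l ! length (snd j)})"
  have inj: "inj_on (\<lambda>i. (q, take i l)) {..<n}"
    using assms by (intro inj_onI) (metis length_take min.absorb4 lessThan_iff snd_conv)
  have "{\<omega>. hpath q \<omega> n = (q, l)} = prod_emb UNIV (\<lambda>h. measure_pmf (step_kernel \<delta> \<sigma> h)) J (PiE J X)"
    unfolding hpath_eq_iff prod_emb_def J_def X_def using assms
    by (auto simp: PiE_iff min_def)
  also have "emeasure (PS \<delta> \<sigma>) \<dots> = (\<Prod>j\<in>J. emeasure (measure_pmf (step_kernel \<delta> \<sigma> j)) (X j))"
    by (rule emeasure_PiM_emb) (auto simp: J_def)
  also have "\<dots> = (\<Prod>i<n. emeasure (measure_pmf (step_kernel \<delta> \<sigma> (q, take i l))) {l ! i})"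
    unfolding J_def X_def using assms by (subst prod.reindex[OF inj]) (auto intro!: prod.cong simp: min_def)
  also have "\<dots> = (\<Prod>i<n. ennreal (pmf (step_kernel \<delta> \<sigma> (q, take i l)) (l ! i)))"
    by (simp add: emeasure_pmf_single)
  also have "\<dots> = ennreal (Pw \<delta> \<sigma> (q, l))"
    unfolding Pw_def using assms by (simp add: prod_ennreal)
  finally show ?thesis .
qed




lemma meas_hpath:
  fixes \<delta> :: "'q::finite \<Rightarrow> 'a::finite \<Rightarrow> 'q pmf"
  shows "(\<lambda>\<omega>. hpath q \<omega> n) \<in> measurable (PS \<delta> \<sigma>) (count_space UNIV)"
proof (induction n)
  case 0 then show ?case by simp
next
  case (Suc n)
  have "(\<lambda>\<omega>. (\<lambda>h \<omega>. (fst h, snd h @ [\<omega> h])) (hpath q \<omega> n) \<omega>) \<in> measurable (PS \<delta> \<sigma>) (count_space UNIV)"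
  proof (rule measurable_compose_countable[OF _ Suc])
    fix h :: "('q,'a) hist"
    have "(\<lambda>\<omega>. \<omega> h) \<in> measurable (PS \<delta> \<sigma>) (measure_pmf (step_kernel \<delta> \<sigma> h))"
      by (rule measurable_component_singleton) simp
    then have "(\<lambda>\<omega>. \<omega> h) \<in> measurable (PS \<delta> \<sigma>) (count_space UNIV)"
      by simp
    then show "(\<lambda>\<omega>. (fst h, snd h @ [\<omega> h])) \<in> measurable (PS \<delta> \<sigma>) (count_space UNIV)"
      by (rule measurable_compose) simp
  qed
  then show ?case by simp
qed

abbreviation rmap where "rmap q \<equiv> (\<lambda>\<omega>. to_stream (\<lambda>n. hlast (hpath q \<omega> n)))"

lemma snth_rmap: "rmap q \<omega> !! n = hlast (hpath q \<omega> n)"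
  by (simp add: to_stream_def)

lemma meas_rmap:
  fixes \<delta> :: "'q::finite \<Rightarrow> 'a::finite \<Rightarrow> 'q pmf"
  shows "rmap q \<in> measurable (PS \<delta> \<sigma>) (stream_space (count_space UNIV))"
proof (rule measurable_stream_space2)
  fix n
  show "(\<lambda>\<omega>. rmap q \<omega> !! n) \<in> measurable (PS \<delta> \<sigma>) (count_space UNIV)"
    unfolding snth_rmap by (rule measurable_compose[OF meas_hpath]) simp
qed

lemma prob_space_run:
  fixes \<delta> :: "'q::finite \<Rightarrow> 'a::finite \<Rightarrow> 'q pmf"
  shows "prob_space (run_measure \<delta> \<sigma> q)"
proof -
  interpret product_prob_space "\<lambda>h. measure_pmf (step_kernel \<delta> \<sigma> h)" UNIV by (rule PS_prod)
  show ?thesis unfolding run_measure_def by (rule prob_space_distr[OF meas_rmap])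
qed

lemma sets_run[simp]: "sets (run_measure \<delta> \<sigma> q) = sets (stream_space (count_space UNIV))"
  unfolding run_measure_def by simp

definition Hs :: "'q \<Rightarrow> 'q list \<Rightarrow> ('q, 'a) hist set" where
  "Hs q xs = {h. fst h = q \<and> length (snd h) = length xs - 1 \<and> (\<forall>i<length xs. hlast (q, take i (snd h)) = xs ! i)}"

lemma finite_Hs: "finite (Hs q (xs :: 'q::finite list) :: ('q, 'a::finite) hist set)"
proof -
  have "Hs q xs \<subseteq> {q} \<times> {l. set l \<subseteq> UNIV \<and> length l = length xs - 1}"
    unfolding Hs_def by auto
  moreover have "finite ({q} \<times> {l :: ('a \<times> 'q) list. set l \<subseteq> UNIV \<and> length l = length xs - 1})"
    by (intro finite_cartesian_product finite_lists_length_eq) auto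
  ultimately show ?thesis by (rule finite_subset)
qed

lemma emeasure_run_sstart:
  fixes \<delta> :: "'q::finite \<Rightarrow> 'a::finite \<Rightarrow> 'q pmf"
  assumes "xs \<noteq> []"
  shows "emeasure (run_measure \<delta> \<sigma> q) (sstart UNIV xs) = (\<Sum>h\<in>Hs q xs. ennreal (Pw \<delta> \<sigma> h))"
proof -
  define m where "m = length xs - 1"
  have ht: "\<And>(\<omega>::('q,'a) hist \<Rightarrow> 'a \<times> 'q) i. i < length xs \<Longrightarrow> hpath q \<omega> i = (q, take i (snd (hpath q \<omega> m)))"
    by (rule hpath_take) (simp add: m_def)
  have pre: "rmap q -` sstart UNIV xs \<inter> space (PS \<delta> \<sigma>) = (\<Union>h\<in>Hs q xs. {\<omega>. hpath q \<omega> m = h})"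
  proof (intro set_eqI iffI)
    fix \<omega> :: "('q,'a) hist \<Rightarrow> 'a \<times> 'q" assume "\<omega> \<in> rmap q -` sstart UNIV xs \<inter> space (PS \<delta> \<sigma>)"
    then have "\<forall>i<length xs. hlast (hpath q \<omega> i) = xs ! i"
      by (simp add: sstart_eq snth_rmap)
    then have "\<forall>i<length xs. hlast (q, take i (snd (hpath q \<omega> m))) = xs ! i"
      using ht by metis
    then have "hpath q \<omega> m \<in> Hs q xs"
      unfolding Hs_def by (simp add: hpath_fst hpath_len m_def)
    then show "\<omega> \<in> (\<Union>h\<in>Hs q xs. {\<omega>. hpath q \<omega> m = h})" by auto
  next
    fix \<omega> :: "('q,'a) hist \<Rightarrow> 'a \<times> 'q" assume "\<omega> \<in> (\<Union>h\<in>Hs q xs. {\<omega>. hpath q \<omega> m = h})"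
    then have "hpath q \<omega> m \<in> Hs q xs" by auto
    then have "\<forall>i<length xs. hlast (q, take i (snd (hpath q \<omega> m))) = xs ! i"
      unfolding Hs_def by simp
    then have "\<forall>i<length xs. hlast (hpath q \<omega> i) = xs ! i"
      by (auto simp: ht)
    then show "\<omega> \<in> rmap q -` sstart UNIV xs \<inter> space (PS \<delta> \<sigma>)"
      by (simp add: sstart_eq snth_rmap)
  qed
  have "emeasure (run_measure \<delta> \<sigma> q) (sstart UNIV xs) = emeasure (PS \<delta> \<sigma>) (rmap q -` sstart UNIV xs \<inter> space (PS \<delta> \<sigma>))"
    unfolding run_measure_def by (rule emeasure_distr[OF meas_rmap]) simp
  also have "\<dots> = emeasure (PS \<delta> \<sigma>) (\<Union>h\<in>Hs q xs. {\<omega>. hpath q \<omega> m = h})"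
    by (simp only: pre)
  also have "\<dots> = (\<Sum>h\<in>Hs q xs. emeasure (PS \<delta> \<sigma>) {\<omega>. hpath q \<omega> m = h})"
  proof (rule sum_emeasure[symmetric])
    show "(\<lambda>h. {\<omega>. hpath q \<omega> m = h}) ` Hs q xs \<subseteq> sets (PS \<delta> \<sigma>)"
    proof safe
      fix h :: "('q,'a) hist"
      have "{\<omega>. hpath q \<omega> m = h} = (\<lambda>\<omega>. hpath q \<omega> m) -` {h} \<inter> space (PS \<delta> \<sigma>)" by auto
      also have "\<dots> \<in> sets (PS \<delta> \<sigma>)"
        by (rule measurable_sets[OF meas_hpath]) simp
      finally show "{\<omega>. hpath q \<omega> m = h} \<in> sets (PS \<delta> \<sigma>)" .
    qed
    show "disjoint_family_on (\<lambda>h. {\<omega>. hpath q \<omega> m = h}) (Hs q xs)"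
      by (auto simp: disjoint_family_on_def)
  qed (rule finite_Hs)
  also have "\<dots> = (\<Sum>h\<in>Hs q xs. ennreal (Pw \<delta> \<sigma> h))"
  proof (rule sum.cong[OF refl])
    fix h :: "('q,'a) hist" assume "h \<in> Hs q xs"
    then obtain l where h: "h = (q, l)" "length l = m" unfolding Hs_def m_def by (cases h) auto
    then show "emeasure (PS \<delta> \<sigma>) {\<omega>. hpath q \<omega> m = h} = ennreal (Pw \<delta> \<sigma> h)"
      using emeasure_hpath[of l m] by simp
  qed
  finally show ?thesis .
qed




definition Dk :: "('q, 'a) strat pmf \<Rightarrow> ('q, 'a) hist \<Rightarrow> real" where
  "Dk \<tau> h = (\<integral>\<sigma>. wS \<sigma> h \<partial>measure_pmf \<tau>)"

definition Nk :: "('q, 'a) strat pmf \<Rightarrow> ('q, 'a) hist \<Rightarrow> 'a \<Rightarrow> real" where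
  "Nk \<tau> h a = (\<integral>\<sigma>. wS \<sigma> h * pmf (\<sigma> h) a \<partial>measure_pmf \<tau>)"

definition kuhn :: "('q, 'a::finite) strat pmf \<Rightarrow> ('q, 'a) strat" where
  "kuhn \<tau> h = (if Dk \<tau> h = 0 then return_pmf undefined else embed_pmf (\<lambda>a. Nk \<tau> h a / Dk \<tau> h))"

lemma int_wS: "integrable (measure_pmf \<tau>) (\<lambda>\<sigma>. wS \<sigma> h)"
  by (rule measure_pmf.integrable_const_bound[where B=1]) (auto simp: wS_nonneg wS_le1)

lemma int_wSp: "integrable (measure_pmf \<tau>) (\<lambda>\<sigma>. wS \<sigma> h * pmf (\<sigma> h) a)"
  by (rule measure_pmf.integrable_const_bound[where B=1])
     (auto simp: wS_nonneg wS_le1 pmf_le_1 intro!: mult_le_one)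

lemma int_Pw: "integrable (measure_pmf \<tau>) (\<lambda>\<sigma>. Pw \<delta> \<sigma> h)"
  by (rule measure_pmf.integrable_const_bound[where B=1]) (auto simp: Pw_nonneg Pw_le1)

lemma Nk_nonneg: "0 \<le> Nk \<tau> h a"
  unfolding Nk_def by (rule integral_nonneg_AE) (simp add: wS_nonneg)

lemma Nk_le: "Nk \<tau> h a \<le> Dk \<tau> h"
  unfolding Nk_def Dk_def
  by (rule integral_mono[OF int_wSp int_wS]) (simp add: wS_nonneg pmf_le_1 mult_left_le)

lemma sum_Nk: "(\<Sum>a\<in>UNIV. Nk \<tau> h (a::'a::finite)) = Dk \<tau> h"
proof -
  have "(\<Sum>a\<in>UNIV. Nk \<tau> h a) = (\<integral>\<sigma>. (\<Sum>a\<in>UNIV. wS \<sigma> h * pmf (\<sigma> h) a) \<partial>measure_pmf \<tau>)"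
    unfolding Nk_def by (rule Bochner_Integration.integral_sum[symmetric]) (rule int_wSp)
  also have "\<dots> = Dk \<tau> h"
    unfolding Dk_def by (simp add: sum_distrib_left[symmetric] sum_pmf_eq_1)
  finally show ?thesis .
qed

lemma pmf_kuhn:
  assumes "Dk \<tau> h \<noteq> 0"
  shows "pmf (kuhn \<tau> h) a = Nk \<tau> h a / Dk \<tau> h"
proof -
  have D: "Dk \<tau> h > 0" using assms Nk_le[of \<tau> h a] Nk_nonneg[of \<tau> h a] by linarith
  have "(\<integral>\<^sup>+x. ennreal (Nk \<tau> h x / Dk \<tau> h) \<partial>count_space UNIV) = (\<Sum>x\<in>UNIV. ennreal (Nk \<tau> h x / Dk \<tau> h))"
    by (rule nn_integral_count_space_finite) simp
  also have "\<dots> = ennreal (\<Sum>x\<in>UNIV. Nk \<tau> h x / Dk \<tau> h)"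
    by (rule sum_ennreal) (simp add: Nk_nonneg D less_imp_le)
  also have "\<dots> = 1"
    using D by (simp add: sum_divide_distrib[symmetric] sum_Nk)
  finally have "(\<integral>\<^sup>+x. ennreal (Nk \<tau> h x / Dk \<tau> h) \<partial>count_space UNIV) = 1" .
  then have "pmf (embed_pmf (\<lambda>a. Nk \<tau> h a / Dk \<tau> h)) a = Nk \<tau> h a / Dk \<tau> h"
    by (intro pmf_embed_pmf) (auto simp: Nk_nonneg D less_imp_le)
  then show ?thesis
    unfolding kuhn_def using assms by simp
qed

lemma wS_kuhn: "wS (kuhn \<tau>) (q, l) = Dk \<tau> (q, l)"
proof (induction l rule: rev_induct)
  case Nil
  then show ?case by (simp add: Dk_def)
next
  case (snoc x l)
  have DN: "Dk \<tau> (q, l @ [x]) = Nk \<tau> (q, l) (fst x)"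
    unfolding Dk_def Nk_def by (simp add: wS_snoc)
  show ?case
  proof (cases "Dk \<tau> (q, l) = 0")
    case True
    then have "Nk \<tau> (q, l) (fst x) = 0" using Nk_le[of \<tau> "(q,l)" "fst x"] Nk_nonneg[of \<tau> "(q,l)" "fst x"] by linarith
    then show ?thesis using True snoc DN by (simp add: wS_snoc)
  next
    case False
    then show ?thesis using snoc DN by (simp add: wS_snoc pmf_kuhn)
  qed
qed

lemma Pw_kuhn: "Pw \<delta> (kuhn \<tau>) h = (\<integral>\<sigma>. Pw \<delta> \<sigma> h \<partial>measure_pmf \<tau>)"
proof -
  obtain q l where h: "h = (q, l)" by (cases h)
  have "Pw \<delta> (kuhn \<tau>) h = Dk \<tau> h * wD \<delta> h"
    by (simp add: Pw_eq h wS_kuhn)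
  also have "\<dots> = (\<integral>\<sigma>. wS \<sigma> h * wD \<delta> h \<partial>measure_pmf \<tau>)"
    unfolding Dk_def by simp
  finally show ?thesis by (simp add: Pw_eq)
qed




lemma run_in_prob_algebra:
  fixes \<delta> :: "'q::finite \<Rightarrow> 'a::finite \<Rightarrow> 'q pmf"
  shows "run_measure \<delta> \<sigma> q \<in> space (prob_algebra (stream_space (count_space UNIV)))"
  by (simp add: space_prob_algebra prob_space_run)

lemma run_kuhn:
  fixes \<delta> :: "'q::finite \<Rightarrow> 'a::finite \<Rightarrow> 'q pmf"
  shows "run_measure \<delta> (kuhn \<tau>) q = measure_pmf \<tau> \<bind> (\<lambda>\<sigma>. run_measure \<delta> \<sigma> q)"
proof -
  have A: "measure_pmf \<tau> \<in> space (prob_algebra (measure_pmf \<tau>))"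
    by (simp add: space_prob_algebra measure_pmf.prob_space_axioms)
  have B: "(\<lambda>\<sigma>. run_measure \<delta> \<sigma> q) \<in> measure_pmf \<tau> \<rightarrow>\<^sub>M prob_algebra (stream_space (count_space UNIV))"
    by (auto simp: run_in_prob_algebra)
  show ?thesis
  proof (rule stream_space_eq_sstart[where S = UNIV])
    show "countable (UNIV :: 'q set)" by simp
    show "prob_space (run_measure \<delta> (kuhn \<tau>) q)" by (rule prob_space_run)
    show "prob_space (measure_pmf \<tau> \<bind> (\<lambda>\<sigma>. run_measure \<delta> \<sigma> q))" by (rule prob_space_bind'[OF A B])
    show "sets (run_measure \<delta> (kuhn \<tau>) q) = sets (stream_space (count_space UNIV))" by simp
    show "sets (measure_pmf \<tau> \<bind> (\<lambda>\<sigma>. run_measure \<delta> \<sigma> q)) = sets (stream_space (count_space UNIV))"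
      by (rule sets_bind'[OF A B])
    show "AE x in run_measure \<delta> (kuhn \<tau>) q. x \<in> streams UNIV" by simp
    show "AE x in measure_pmf \<tau> \<bind> (\<lambda>\<sigma>. run_measure \<delta> \<sigma> q). x \<in> streams UNIV" by simp
  next
    fix xs :: "'q list"
    assume xs: "xs \<noteq> []"
    have "emeasure (run_measure \<delta> (kuhn \<tau>) q) (sstart UNIV xs) = (\<Sum>h\<in>Hs q xs. ennreal (Pw \<delta> (kuhn \<tau>) h))"
      by (rule emeasure_run_sstart[OF xs])
    also have "\<dots> = (\<Sum>h\<in>Hs q xs. (\<integral>\<^sup>+\<sigma>. ennreal (Pw \<delta> \<sigma> h) \<partial>measure_pmf \<tau>))"
      by (intro sum.cong refl) (simp add: Pw_kuhn nn_integral_eq_integral int_Pw Pw_nonneg)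
    also have "\<dots> = (\<integral>\<^sup>+\<sigma>. (\<Sum>h\<in>Hs q xs. ennreal (Pw \<delta> \<sigma> h)) \<partial>measure_pmf \<tau>)"
      by (rule nn_integral_sum[symmetric]) simp
    also have "\<dots> = (\<integral>\<^sup>+\<sigma>. emeasure (run_measure \<delta> \<sigma> q) (sstart UNIV xs) \<partial>measure_pmf \<tau>)"
      by (simp add: emeasure_run_sstart[OF xs])
    also have "\<dots> = emeasure (measure_pmf \<tau> \<bind> (\<lambda>\<sigma>. run_measure \<delta> \<sigma> q)) (sstart UNIV xs)"
      by (rule emeasure_bind_prob_algebra[OF A B, symmetric]) simp
    finally show "emeasure (run_measure \<delta> (kuhn \<tau>) q) (sstart UNIV xs) =
      emeasure (measure_pmf \<tau> \<bind> (\<lambda>\<sigma>. run_measure \<delta> \<sigma> q)) (sstart UNIV xs)" .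
  qed
qed

lemma run_le1:
  fixes \<delta> :: "'q::finite \<Rightarrow> 'a::finite \<Rightarrow> 'q pmf"
  shows "measure (run_measure \<delta> \<sigma> q) W \<le> 1"
proof -
  interpret prob_space "run_measure \<delta> \<sigma> q" by (rule prob_space_run)
  show ?thesis by (rule prob_le_1)
qed

lemma mixed_prob_kuhn:
  fixes \<delta> :: "'q::finite \<Rightarrow> 'a::finite \<Rightarrow> 'q pmf"
  shows "mixed_prob \<delta> \<tau> q W = measure (run_measure \<delta> (kuhn \<tau>) q) W"
proof -
  have "measure (run_measure \<delta> (kuhn \<tau>) q) W = (\<integral>\<sigma>. measure (run_measure \<delta> \<sigma> q) W \<partial>measure_pmf \<tau>)"
  proof (cases "W \<in> sets (stream_space (count_space UNIV))")
    case True
    have f: "(\<lambda>\<sigma>. run_measure \<delta> \<sigma> q) \<in> measurable (measure_pmf \<tau>) (subprob_algebra (stream_space (count_space UNIV)))"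
      by (simp add: space_subprob_algebra prob_space_imp_subprob_space prob_space_run)
    show ?thesis unfolding run_kuhn
      by (rule measure_pmf.measure_bind[OF f True])
  next
    case False
    then show ?thesis by (simp add: measure_notin_sets)
  qed
  also have "\<dots> = infsetsum (\<lambda>\<sigma>. pmf \<tau> \<sigma> * measure (run_measure \<delta> \<sigma> q) W) UNIV"
    by (rule pmf_expectation_eq_infsetsum)
  also have "\<dots> = infsetsum (\<lambda>\<sigma>. pmf \<tau> \<sigma> * measure (run_measure \<delta> \<sigma> q) W) (set_pmf \<tau>)"
    by (rule infsetsum_cong_neutral) (auto simp: set_pmf_eq)
  also have "\<dots> = mixed_prob \<delta> \<tau> q W"
    unfolding mixed_prob_def
    by (rule infsetsum_infsum, rule abs_summable_on_comparison_test'[OF pmf_abs_summable[of \<tau>]])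
       (simp add: mult_left_le run_le1)
  finally show ?thesis by simp
qed

lemma mixed_prob_return:
  "mixed_prob \<delta> (return_pmf \<sigma>) q W = measure (run_measure \<delta> \<sigma> q) W"
  unfolding mixed_prob_def by simp




theorem mainTheorem7:
  fixes E :: "'e set"
    and \<delta> :: "'e \<Rightarrow> 'q::finite \<Rightarrow> 'a::finite \<Rightarrow> 'q pmf"
    and q :: 'q
    and f :: "'q \<Rightarrow> nat"
  assumes "finite E" and "E \<noteq> {}"
  shows "(SUP \<tau>. val_uni_mixed E \<delta> q \<tau> (parity f)) = val_uni E \<delta> q (parity f)"
proof -
  define g where "g = (\<lambda>\<sigma>. MIN e\<in>E. measure (run_measure (\<delta> e) \<sigma> q) (parity f))"
  have mix: "val_uni_mixed E \<delta> q \<tau> (parity f) = g (kuhn \<tau>)" for \<tau>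
    unfolding val_uni_mixed_def g_def by (simp add: mixed_prob_kuhn)
  have ret: "val_uni_mixed E \<delta> q (return_pmf \<sigma>) (parity f) = g \<sigma>" for \<sigma>
    unfolding val_uni_mixed_def g_def by (simp add: mixed_prob_return)
  have gle: "g \<sigma> \<le> 1" for \<sigma>
  proof -
    obtain e where e: "e \<in> E" using assms(2) by auto
    show ?thesis unfolding g_def using assms e
      by (subst Min_le_iff) (auto intro!: bexI[OF _ e] run_le1)
  qed
  have bdd: "bdd_above (range g)" by (rule bdd_aboveI[where M=1]) (auto simp: gle)
  have bdd2: "bdd_above (range (\<lambda>\<tau>. val_uni_mixed E \<delta> q \<tau> (parity f)))"
    by (rule bdd_aboveI[where M=1]) (auto simp: mix gle)
  have "(SUP \<tau>. val_uni_mixed E \<delta> q \<tau> (parity f)) = (SUP \<sigma>. g \<sigma>)"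
  proof (rule antisym)
    show "(SUP \<tau>. val_uni_mixed E \<delta> q \<tau> (parity f)) \<le> (SUP \<sigma>. g \<sigma>)"
      by (rule cSUP_least) (auto simp: mix intro!: cSUP_upper bdd)
    show "(SUP \<sigma>. g \<sigma>) \<le> (SUP \<tau>. val_uni_mixed E \<delta> q \<tau> (parity f))"
    proof (rule cSUP_least)
      fix \<sigma>
      have "g \<sigma> = val_uni_mixed E \<delta> q (return_pmf \<sigma>) (parity f)" by (simp add: ret)
      also have "\<dots> \<le> (SUP \<tau>. val_uni_mixed E \<delta> q \<tau> (parity f))"
        by (rule cSUP_upper[OF _ bdd2]) simp
      finally show "g \<sigma> \<le> (SUP \<tau>. val_uni_mixed E \<delta> q \<tau> (parity f))" .
    qed simp
  qed
  also have "\<dots> = val_uni E \<delta> q (parity f)"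
    unfolding val_uni_def g_def by simp
  finally show ?thesis .
qed


end
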